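(* For any eviction algorithm $\mathcal Q$ and any input (and, if $\mathcal Q$ is randomized, any realization of its random bits) there exists an eviction graph $H_{\mathcal Q}$ with edge set $E$ such that $$\mathrm{OBJ}_{\mathcal Q}\le \mathrm{OPT}+|E|.$$
   Context: Caching setting: cache of capacity $k$, requests $\sigma(1),\dots,\sigma(T)$ processed online starting from an empty cache; on a hit nothing happens, on a miss the page is loaded and, if the cache is full, one cached page is evicted first. $\mathrm{OBJ}_{\mathcal Q}$ is the number of misses of $\mathcal Q$; $\mathrm{OPT}$ is the number of misses of Belady's optimal offline algorithm (evicts the cached page whose next request is furthest in the future). $\nu(t)=\min\{s>t:\sigma(s)=\sigma(t)\}$ ($T+1$ if none). Cached pages are identified by the index of their most recent request: $\mathcal I_{\mathcal Q}(t)$ is the set of indices $\max\{t'\le t:\sigma(t')=s\}$ over pages $s$ cached after processing request $t$. An eviction graph $H_{\mathcal Q}$ is a directed graph on vertex set $\{1,\dots,T\}$ such that for every edge $(i,j)$ there is a time $t+1$ at which $\mathcal Q$ evicts $\sigma(j)$ with $j\in\mathcal I_{\mathcal Q}(t)$ while $i\in\mathcal I_{\mathcal Q}(t)$ and $\nu(i)>\nu(j)$; moreover for each $j$ there is at most one edge of the form $(i,j)$. *)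

theory Defs
  imports Main
begin

text \<open>Requests are sigma 1, ..., sigma T.  A run of a caching algorithm on this input
 (with fixed random bits) is the sequence of cache contents C t after processing request t,
 C 0 = {} being the initial empty cache.\<close>

definition miss :: "(nat \<Rightarrow> 'p) \<Rightarrow> (nat \<Rightarrow> 'p set) \<Rightarrow> nat \<Rightarrow> bool" where
  "miss \<sigma> C t \<longleftrightarrow> \<sigma> t \<notin> C (t - 1)"

definition valid_run :: "nat \<Rightarrow> nat \<Rightarrow> (nat \<Rightarrow> 'p) \<Rightarrow> (nat \<Rightarrow> 'p set) \<Rightarrow> bool" where
  "valid_run k T \<sigma> C \<longleftrightarrow> C 0 = {} \<and>
     (\<forall>t\<in>{1..T}.
        (\<sigma> t \<in> C (t - 1) \<longrightarrow> C t = C (t - 1)) \<and>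
        (\<sigma> t \<notin> C (t - 1) \<and> card (C (t - 1)) < k \<longrightarrow> C t = insert (\<sigma> t) (C (t - 1))) \<and>
        (\<sigma> t \<notin> C (t - 1) \<and> \<not> card (C (t - 1)) < k \<longrightarrow>
            (\<exists>e\<in>C (t - 1). C t = insert (\<sigma> t) (C (t - 1) - {e}))))"

definition num_misses :: "nat \<Rightarrow> (nat \<Rightarrow> 'p) \<Rightarrow> (nat \<Rightarrow> 'p set) \<Rightarrow> nat" where
  "num_misses T \<sigma> C = card {t\<in>{1..T}. miss \<sigma> C t}"

definition next_req :: "nat \<Rightarrow> (nat \<Rightarrow> 'p) \<Rightarrow> nat \<Rightarrow> 'p \<Rightarrow> nat" where
  "next_req T \<sigma> t p = (if \<exists>s. t < s \<and> s \<le> T \<and> \<sigma> s = p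
                         then (LEAST s. t < s \<and> s \<le> T \<and> \<sigma> s = p) else T + 1)"

definition nu :: "nat \<Rightarrow> (nat \<Rightarrow> 'p) \<Rightarrow> nat \<Rightarrow> nat" where
  "nu T \<sigma> t = next_req T \<sigma> t (\<sigma> t)"

definition belady_run :: "nat \<Rightarrow> nat \<Rightarrow> (nat \<Rightarrow> 'p) \<Rightarrow> (nat \<Rightarrow> 'p set) \<Rightarrow> bool" where
  "belady_run k T \<sigma> B \<longleftrightarrow> valid_run k T \<sigma> B \<and>
     (\<forall>t\<in>{1..T}. \<forall>e\<in>B (t - 1). e \<notin> B t \<longrightarrow>
        (\<forall>q\<in>B (t - 1). next_req T \<sigma> t q \<le> next_req T \<sigma> t e))"

definition last_req :: "(nat \<Rightarrow> 'p) \<Rightarrow> nat \<Rightarrow> 'p \<Rightarrow> nat" where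
  "last_req \<sigma> t s = Max {t'. 1 \<le> t' \<and> t' \<le> t \<and> \<sigma> t' = s}"

definition cached_idx :: "(nat \<Rightarrow> 'p) \<Rightarrow> (nat \<Rightarrow> 'p set) \<Rightarrow> nat \<Rightarrow> nat set" where
  "cached_idx \<sigma> C t = last_req \<sigma> t ` C t"

definition eviction_graph :: "nat \<Rightarrow> (nat \<Rightarrow> 'p) \<Rightarrow> (nat \<Rightarrow> 'p set) \<Rightarrow> (nat \<times> nat) set \<Rightarrow> bool" where
  "eviction_graph T \<sigma> C E \<longleftrightarrow> E \<subseteq> {1..T} \<times> {1..T} \<and>
     (\<forall>(i, j)\<in>E. \<exists>t. t + 1 \<le> T \<and>
         \<sigma> j \<in> C t \<and> \<sigma> j \<notin> C (t + 1) \<and>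
         j \<in> cached_idx \<sigma> C t \<and> i \<in> cached_idx \<sigma> C t \<and> nu T \<sigma> i > nu T \<sigma> j) \<and>
     (\<forall>i i' j. (i, j) \<in> E \<and> (i', j) \<in> E \<longrightarrow> i = i')"

end

theory Submission
  imports Defs
begin


definition vi :: "('p \<Rightarrow> 'p) \<Rightarrow> ('p \<Rightarrow> nat) \<Rightarrow> 'p \<Rightarrow> nat" where
  "vi g nx q = (if nx (g q) < nx q then 1 else 0)"
definition cst :: "('p \<Rightarrow> 'p) \<Rightarrow> 'p set \<Rightarrow> ('p \<Rightarrow> nat) \<Rightarrow> nat" where
  "cst g Q nx = (\<Sum>q\<in>Q. vi g nx q)"

lemma bij_from_img:
  assumes "finite A" "g ` A = B" "card A = card B"
  shows "bij_betw g A B"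
  using assms by (simp add: bij_betw_def eq_card_imp_inj_on)

lemma L_hit:
  assumes bij: "bij_betw g Q0 B0" and fin: "finite Q0" and rQ: "r \<in> Q0" and rB: "r \<in> B0"
  shows "\<exists>g'. bij_betw g' Q0 B0 \<and> g' r = r \<and> cst g' Q0 nx \<le> cst g Q0 nx"
proof -
  have img: "g ` Q0 = B0" and inj: "inj_on g Q0" using bij by (auto simp: bij_betw_def)
  obtain q where q: "q \<in> Q0" "g q = r" using img rB by auto
  show ?thesis
  proof (cases "q = r")
    case True
    then show ?thesis using bij q by auto
  next
    case False
    define g' where "g' = (\<lambda>x. if x = r then r else if x = q then g r else g x)"
    define Z where "Z = Q0 - {r, q}"
    have Q0: "Q0 = insert r (insert q Z)" using q rQ by (auto simp: Z_def)
    have fZ: "finite Z" using fin by (simp add: Z_def)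
    have rZ: "r \<notin> Z" "q \<notin> Z" by (auto simp: Z_def)
    have img': "g' ` Q0 = B0"
    proof
      show "g' ` Q0 \<subseteq> B0" using img rB rQ by (auto simp: g'_def)
      show "B0 \<subseteq> g' ` Q0"
      proof
        fix b assume "b \<in> B0"
        then obtain x where x: "x \<in> Q0" "g x = b" using img by auto
        show "b \<in> g' ` Q0"
        proof (cases "x = r")
          case True thus ?thesis using x q False by (auto simp: g'_def intro!: image_eqI[of _ _ q])
        next
          case F2: False
          show ?thesis
          proof (cases "x = q")
            case True thus ?thesis using x q rQ by (auto simp: g'_def intro!: image_eqI[of _ _ r])
          next
            case False thus ?thesis using x F2 by (auto simp: g'_def intro!: image_eqI[of _ _ x])
          qed
        qed
      qed
    qed
    have "bij_betw g' Q0 B0"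
      using bij_from_img[OF fin img'] bij bij_betw_same_card by blast
    moreover have "g' r = r" by (simp add: g'_def)
    moreover have "cst g' Q0 nx \<le> cst g Q0 nx"
    proof -
      have "sum (vi g' nx) Z = sum (vi g nx) Z"
        by (rule sum.cong) (use rZ in \<open>auto simp: vi_def g'_def\<close>)
      moreover have "vi g' nx q \<le> vi g nx q + vi g nx r"
        using False q by (auto simp: vi_def g'_def)
      moreover have "vi g' nx r = 0" by (simp add: vi_def g'_def)
      ultimately show ?thesis unfolding cst_def Q0 using fZ rZ False by simp
    qed
    ultimately show ?thesis by blast
  qed
qed

lemma L_missQ:
  assumes bij: "bij_betw g Q0 B0" and fin: "finite Q0" and rQ: "r \<notin> Q0" and rB: "r \<in> B0"
    and eQ: "e \<in> Q0" and nxr: "\<And>x. x \<noteq> r \<Longrightarrow> nx r < nx x"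
  shows "\<exists>g'. bij_betw g' (insert r (Q0 - {e})) B0 \<and> g' r = r \<and>
     cst g' (insert r (Q0 - {e})) nx + 1 \<le> cst g Q0 nx + (if \<forall>x\<in>Q0. nx x \<le> nx e then 0 else 1)"
proof -
  have img: "g ` Q0 = B0" and inj: "inj_on g Q0" using bij by (auto simp: bij_betw_def)
  obtain q where q: "q \<in> Q0" "g q = r" using img rB by auto
  have qr: "q \<noteq> r" using q rQ by auto
  define g' where "g' = (\<lambda>x. if x = r then r else if x = q then g e else g x)"
  have fin1: "finite (insert r (Q0 - {e}))" using fin by simp
  have img': "g' ` (insert r (Q0 - {e})) = B0"
  proof
    show "g' ` (insert r (Q0 - {e})) \<subseteq> B0" using img rB eQ by (auto simp: g'_def)
    show "B0 \<subseteq> g' ` (insert r (Q0 - {e}))"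
    proof
      fix b assume "b \<in> B0"
      then obtain x where x: "x \<in> Q0" "g x = b" using img by auto
      show "b \<in> g' ` (insert r (Q0 - {e}))"
      proof (cases "x = q")
        case True thus ?thesis using x q by (auto simp: g'_def intro!: image_eqI[of _ _ r])
      next
        case F2: False
        show ?thesis
        proof (cases "x = e")
          case True thus ?thesis using x q F2 qr by (auto simp: g'_def intro!: image_eqI[of _ _ q])
        next
          case False thus ?thesis using x F2 rQ by (auto simp: g'_def intro!: image_eqI[of _ _ x])
        qed
      qed
    qed
  qed
  have "card (insert r (Q0 - {e})) = card B0"
    using fin rQ eQ bij_betw_same_card[OF bij] card_gt_0_iff[of Q0] by auto
  hence "bij_betw g' (insert r (Q0 - {e})) B0"
    using bij_from_img[OF fin1 img'] by blast
  moreover have "g' r = r" by (simp add: g'_def)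
  moreover have "cst g' (insert r (Q0 - {e})) nx + 1 \<le> cst g Q0 nx + (if \<forall>x\<in>Q0. nx x \<le> nx e then 0 else 1)"
  proof (cases "q = e")
    case True
    define Z where "Z = Q0 - {e}"
    have Q0: "Q0 = insert e Z" using eQ by (auto simp: Z_def)
    have fZ: "finite Z" using fin by (simp add: Z_def)
    have rZ: "r \<notin> Z" "e \<notin> Z" using rQ by (auto simp: Z_def)
    have "sum (vi g' nx) Z = sum (vi g nx) Z"
      by (rule sum.cong) (use rZ True in \<open>auto simp: vi_def g'_def\<close>)
    moreover have "vi g nx e = 1" using True q qr nxr[of e] by (auto simp: vi_def)
    moreover have "vi g' nx r = 0" by (simp add: vi_def g'_def)
    moreover have "sum (vi g nx) Q0 = vi g nx e + sum (vi g nx) Z" using fZ rZ by (subst Q0) simp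
    moreover have "sum (vi g' nx) (insert r (Q0 - {e})) = vi g' nx r + sum (vi g' nx) Z"
      using fZ rZ by (simp add: Z_def[symmetric])
    ultimately show ?thesis unfolding cst_def by linarith
  next
    case False
    define Z where "Z = Q0 - {e, q}"
    have Q0: "Q0 = insert e (insert q Z)" using eQ q by (auto simp: Z_def)
    have Q1: "insert r (Q0 - {e}) = insert r (insert q Z)" using eQ q False by (auto simp: Z_def)
    have fZ: "finite Z" using fin by (simp add: Z_def)
    have rZ: "r \<notin> Z" "e \<notin> Z" "q \<notin> Z" using rQ by (auto simp: Z_def)
    have "sum (vi g' nx) Z = sum (vi g nx) Z"
      by (rule sum.cong) (use rZ in \<open>auto simp: vi_def g'_def\<close>)
    moreover have "vi g nx q = 1" using q qr nxr[of q] by (auto simp: vi_def)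
    moreover have "vi g' nx r = 0" by (simp add: vi_def g'_def)
    moreover have "vi g' nx q \<le> vi g nx e + (if \<forall>x\<in>Q0. nx x \<le> nx e then 0 else 1)"
      using False qr q(1) by (auto simp: vi_def g'_def)
    moreover have "sum (vi g nx) Q0 = vi g nx e + (vi g nx q + sum (vi g nx) Z)"
      using fZ rZ False by (subst Q0) simp
    moreover have "sum (vi g' nx) (insert r (Q0 - {e})) = vi g' nx r + (vi g' nx q + sum (vi g' nx) Z)"
      using fZ rZ qr by (subst Q1) simp
    ultimately show ?thesis unfolding cst_def by linarith
  qed
  ultimately show ?thesis by blast
qed

lemma L_missB:
  assumes bij: "bij_betw g Q0 B0" and fin: "finite Q0" and rQ: "r \<in> Q0" and rB: "r \<notin> B0"
    and eB: "e \<in> B0"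
  shows "\<exists>g'. bij_betw g' Q0 (insert r (B0 - {e})) \<and> g' r = r \<and>
     cst g' Q0 nx \<le> cst g Q0 nx + 1"
proof -
  have img: "g ` Q0 = B0" and inj: "inj_on g Q0" using bij by (auto simp: bij_betw_def)
  obtain q where q: "q \<in> Q0" "g q = e" using img eB by auto
  define g' where "g' = (\<lambda>x. if x = r then r else if x = q then g r else g x)"
  have img': "g' ` Q0 = insert r (B0 - {e})"
  proof
    show "g' ` Q0 \<subseteq> insert r (B0 - {e})"
    proof
      fix b assume "b \<in> g' ` Q0"
      then obtain x where x: "x \<in> Q0" "b = g' x" by auto
      show "b \<in> insert r (B0 - {e})"
      proof (cases "x = r")
        case True thus ?thesis using x by (simp add: g'_def)
      next
        case F1: False
        show ?thesis
        proof (cases "x = q")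
          case True
          have "g r \<noteq> e" using inj_onD[OF inj, of r q] q rQ True F1 by auto
          moreover have "g r \<in> B0" using img rQ by blast
          ultimately show ?thesis using x True F1 by (simp add: g'_def)
        next
          case False
          have "g x \<noteq> e" using inj_onD[OF inj, of x q] q x False by auto
          moreover have "g x \<in> B0" using img x by blast
          ultimately show ?thesis using x False F1 by (simp add: g'_def)
        qed
      qed
    qed
    show "insert r (B0 - {e}) \<subseteq> g' ` Q0"
    proof
      fix b assume b: "b \<in> insert r (B0 - {e})"
      show "b \<in> g' ` Q0"
      proof (cases "b = r")
        case True thus ?thesis using rQ by (auto simp: g'_def intro!: image_eqI[of _ _ r])
      next
        case F1: False
        then obtain x where x: "x \<in> Q0" "g x = b" "b \<noteq> e" using img b by auto
        have xq: "x \<noteq> q" using x q by auto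
        show ?thesis
        proof (cases "x = r")
          case True thus ?thesis using x q xq by (auto simp: g'_def intro!: image_eqI[of _ _ q])
        next
          case False thus ?thesis using x xq by (auto simp: g'_def intro!: image_eqI[of _ _ x])
        qed
      qed
    qed
  qed
  have "card Q0 = card (insert r (B0 - {e}))"
    using fin rB eB bij_betw_same_card[OF bij] bij_betw_finite[OF bij]
    card_gt_0_iff[of Q0] card_gt_0_iff[of B0] by auto
  hence "bij_betw g' Q0 (insert r (B0 - {e}))"
    using bij_from_img[OF fin img'] by blast
  moreover have "g' r = r" by (simp add: g'_def)
  moreover have "cst g' Q0 nx \<le> cst g Q0 nx + 1"
  proof (cases "q = r")
    case True
    define Z where "Z = Q0 - {r}"
    have Q0: "Q0 = insert r Z" using rQ by (auto simp: Z_def)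
    have fZ: "finite Z" using fin by (simp add: Z_def)
    have rZ: "r \<notin> Z" by (auto simp: Z_def)
    have "sum (vi g' nx) Z = sum (vi g nx) Z"
      by (rule sum.cong) (use rZ True in \<open>auto simp: vi_def g'_def\<close>)
    moreover have "vi g' nx r = 0" by (simp add: vi_def g'_def)
    ultimately show ?thesis unfolding cst_def Q0 using fZ rZ by simp
  next
    case False
    define Z where "Z = Q0 - {r, q}"
    have Q0: "Q0 = insert r (insert q Z)" using rQ q by (auto simp: Z_def)
    have fZ: "finite Z" using fin by (simp add: Z_def)
    have rZ: "r \<notin> Z" "q \<notin> Z" by (auto simp: Z_def)
    have "sum (vi g' nx) Z = sum (vi g nx) Z"
      by (rule sum.cong) (use rZ in \<open>auto simp: vi_def g'_def\<close>)
    moreover have "vi g' nx r = 0" by (simp add: vi_def g'_def)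
    moreover have "vi g' nx q \<le> 1" by (simp add: vi_def)
    ultimately show ?thesis unfolding cst_def Q0 using fZ rZ False by simp
  qed
  ultimately show ?thesis by blast
qed

lemma L_nf:
  assumes bij: "bij_betw g Q0 B0" and fin: "finite Q0" and rQ: "r \<notin> Q0" and rB: "r \<notin> B0"
  shows "\<exists>g'. bij_betw g' (insert r Q0) (insert r B0) \<and> g' r = r \<and>
     cst g' (insert r Q0) nx \<le> cst g Q0 nx"
proof -
  define g' where "g' = (\<lambda>x. if x = r then r else g x)"
  have img: "g ` Q0 = B0" using bij by (simp add: bij_betw_def)
  have "g' ` Q0 = g ` Q0"
    by (rule image_cong) (use rQ in \<open>auto simp: g'_def\<close>)
  moreover have gr: "g' r = r" by (simp add: g'_def)
  ultimately have "g' ` (insert r Q0) = insert r B0" using img by (simp only: image_insert)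
  moreover have "card (insert r Q0) = card (insert r B0)"
  proof -
    have "finite B0" using fin img by blast
    thus ?thesis using fin rQ rB bij_betw_same_card[OF bij] by simp
  qed
  moreover have "finite (insert r Q0)" using fin by simp
  ultimately have "bij_betw g' (insert r Q0) (insert r B0)"
    by (rule bij_from_img[rotated])
  moreover have "g' r = r" by (simp add: g'_def)
  moreover have "cst g' (insert r Q0) nx \<le> cst g Q0 nx"
  proof -
    have "sum (vi g' nx) Q0 = sum (vi g nx) Q0"
      by (rule sum.cong) (use rQ in \<open>auto simp: vi_def g'_def\<close>)
    moreover have "vi g' nx r = 0" by (simp add: vi_def g'_def)
    ultimately show ?thesis unfolding cst_def using fin rQ by simp
  qed
  ultimately show ?thesis by blast
qed

lemma L_full:
  assumes bij: "bij_betw g Q0 B0" and fin: "finite Q0" and rQ: "r \<notin> Q0" and rB: "r \<notin> B0"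
    and eQ: "e \<in> Q0" and eB: "f \<in> B0"
  shows "\<exists>g'. bij_betw g' (insert r (Q0 - {e})) (insert r (B0 - {f})) \<and> g' r = r \<and>
     cst g' (insert r (Q0 - {e})) nx \<le> cst g Q0 nx + (if \<forall>x\<in>Q0. nx x \<le> nx e then 0 else 1)"
proof -
  have img: "g ` Q0 = B0" and inj: "inj_on g Q0" using bij by (auto simp: bij_betw_def)
  obtain q where q: "q \<in> Q0" "g q = f" using img eB by auto
  have qr: "q \<noteq> r" using q rQ by auto
  define g' where "g' = (\<lambda>x. if x = r then r else if x = q then g e else g x)"
  have fin1: "finite (insert r (Q0 - {e}))" using fin by simp
  have img': "g' ` (insert r (Q0 - {e})) = insert r (B0 - {f})"
  proof
    show "g' ` (insert r (Q0 - {e})) \<subseteq> insert r (B0 - {f})"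
    proof
      fix b assume "b \<in> g' ` (insert r (Q0 - {e}))"
      then obtain x where x: "x \<in> insert r (Q0 - {e})" "b = g' x" by auto
      show "b \<in> insert r (B0 - {f})"
      proof (cases "x = r")
        case True thus ?thesis using x by (simp add: g'_def)
      next
        case F1: False
        have xQ: "x \<in> Q0" "x \<noteq> e" using x F1 by auto
        show ?thesis
        proof (cases "x = q")
          case True
          have "g e \<noteq> f" using inj_onD[OF inj, of e q] q eQ True xQ by auto
          moreover have "g e \<in> B0" using img eQ by blast
          ultimately show ?thesis using x True F1 by (simp add: g'_def)
        next
          case False
          have "g x \<noteq> f" using inj_onD[OF inj, of x q] q xQ False by auto
          moreover have "g x \<in> B0" using img xQ by blast
          ultimately show ?thesis using x False F1 by (simp add: g'_def)
        qed
      qed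
    qed
    show "insert r (B0 - {f}) \<subseteq> g' ` (insert r (Q0 - {e}))"
    proof
      fix b assume b: "b \<in> insert r (B0 - {f})"
      show "b \<in> g' ` (insert r (Q0 - {e}))"
      proof (cases "b = r")
        case True thus ?thesis by (auto simp: g'_def intro!: image_eqI[of _ _ r])
      next
        case F1: False
        then obtain x where x: "x \<in> Q0" "g x = b" "b \<noteq> f" using img b by auto
        have xq: "x \<noteq> q" using x q by auto
        show ?thesis
        proof (cases "x = e")
          case True thus ?thesis using x q xq qr by (auto simp: g'_def intro!: image_eqI[of _ _ q])
        next
          case False thus ?thesis using x xq rQ by (auto simp: g'_def intro!: image_eqI[of _ _ x])
        qed
      qed
    qed
  qed
  have "card (insert r (Q0 - {e})) = card (insert r (B0 - {f}))"
  proof -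
    have fB: "finite B0" using fin img by blast
    have c1: "card (insert r (Q0 - {e})) = Suc (card Q0 - 1)"
      using fin rQ eQ by (simp add: card_Diff_singleton)
    have c2: "card (insert r (B0 - {f})) = Suc (card B0 - 1)"
      using fB rB eB by (simp add: card_Diff_singleton)
    have "card Q0 = card B0" using bij_betw_same_card[OF bij] .
    thus ?thesis using c1 c2 by simp
  qed
  hence "bij_betw g' (insert r (Q0 - {e})) (insert r (B0 - {f}))"
    using bij_from_img[OF fin1 img'] by blast
  moreover have "g' r = r" by (simp add: g'_def)
  moreover have "cst g' (insert r (Q0 - {e})) nx \<le> cst g Q0 nx + (if \<forall>x\<in>Q0. nx x \<le> nx e then 0 else 1)"
  proof (cases "q = e")
    case True
    define Z where "Z = Q0 - {e}"
    have Q0: "Q0 = insert e Z" using eQ by (auto simp: Z_def)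
    have fZ: "finite Z" using fin by (simp add: Z_def)
    have rZ: "r \<notin> Z" "e \<notin> Z" using rQ by (auto simp: Z_def)
    have "sum (vi g' nx) Z = sum (vi g nx) Z"
      by (rule sum.cong) (use rZ True in \<open>auto simp: vi_def g'_def\<close>)
    moreover have "vi g' nx r = 0" by (simp add: vi_def g'_def)
    moreover have "sum (vi g nx) Q0 = vi g nx e + sum (vi g nx) Z" using fZ rZ by (subst Q0) simp
    moreover have "sum (vi g' nx) (insert r (Q0 - {e})) = vi g' nx r + sum (vi g' nx) Z"
      using fZ rZ by (simp add: Z_def[symmetric])
    ultimately show ?thesis unfolding cst_def by linarith
  next
    case False
    define Z where "Z = Q0 - {e, q}"
    have Q0: "Q0 = insert e (insert q Z)" using eQ q by (auto simp: Z_def)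
    have Q1: "insert r (Q0 - {e}) = insert r (insert q Z)" using eQ q False by (auto simp: Z_def)
    have fZ: "finite Z" using fin by (simp add: Z_def)
    have rZ: "r \<notin> Z" "e \<notin> Z" "q \<notin> Z" using rQ by (auto simp: Z_def)
    have "sum (vi g' nx) Z = sum (vi g nx) Z"
      by (rule sum.cong) (use rZ in \<open>auto simp: vi_def g'_def\<close>)
    moreover have "vi g' nx r = 0" by (simp add: vi_def g'_def)
    moreover have "vi g' nx q \<le> vi g nx e + (if \<forall>x\<in>Q0. nx x \<le> nx e then 0 else 1)"
      using False qr q(1) by (auto simp: vi_def g'_def)
    moreover have "sum (vi g nx) Q0 = vi g nx e + (vi g nx q + sum (vi g nx) Z)"
      using fZ rZ False by (subst Q0) simp
    moreover have "sum (vi g' nx) (insert r (Q0 - {e})) = vi g' nx r + (vi g' nx q + sum (vi g' nx) Z)"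
      using fZ rZ qr by (subst Q1) simp
    ultimately show ?thesis unfolding cst_def by linarith
  qed
  ultimately show ?thesis by blast
qed




lemma valid_step:
  assumes V: "valid_run k T \<sigma> C" and t: "Suc t \<le> T"
  shows "(\<sigma> (Suc t) \<in> C t \<longrightarrow> C (Suc t) = C t) \<and>
         (\<sigma> (Suc t) \<notin> C t \<and> card (C t) < k \<longrightarrow> C (Suc t) = insert (\<sigma> (Suc t)) (C t)) \<and>
         (\<sigma> (Suc t) \<notin> C t \<and> \<not> card (C t) < k \<longrightarrow>
            (\<exists>e\<in>C t. C (Suc t) = insert (\<sigma> (Suc t)) (C t - {e})))"
proof -
  have "Suc t \<in> {1..T}" using t by simp
  from bspec[OF conjunct2[OF V[unfolded valid_run_def]] this] show ?thesis by simp
qed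

lemma valid_zero: "valid_run k T \<sigma> C \<Longrightarrow> C 0 = {}"
  by (simp add: valid_run_def)

lemma valid_sub:
  assumes V: "valid_run k T \<sigma> C" and t: "Suc t \<le> T"
  shows "C (Suc t) \<subseteq> insert (\<sigma> (Suc t)) (C t)"
  using valid_step[OF V t] by (cases "\<sigma> (Suc t) \<in> C t"; cases "card (C t) < k") auto

lemma run_inv:
  assumes V: "valid_run k T \<sigma> C"
  shows "t \<le> T \<Longrightarrow> finite (C t) \<and> C t \<subseteq> \<sigma> ` {1..t} \<and> (card (C t) < k \<longrightarrow> \<sigma> ` {1..t} \<subseteq> C t)"
proof (induction t)
  case 0
  then show ?case using valid_zero[OF V] by simp
next
  case (Suc t)
  hence IH: "finite (C t)" "C t \<subseteq> \<sigma> ` {1..t}" "card (C t) < k \<longrightarrow> \<sigma> ` {1..t} \<subseteq> C t" by auto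
  have R: "\<sigma> ` {1..Suc t} = insert (\<sigma> (Suc t)) (\<sigma> ` {1..t})"
    by (simp add: atLeastAtMostSuc_conv)
  note S = valid_step[OF V Suc.prems]
  show ?case
  proof (cases "\<sigma> (Suc t) \<in> C t")
    case True
    then show ?thesis using S IH R by auto
  next
    case F: False
    show ?thesis
    proof (cases "card (C t) < k")
      case True
      hence C1: "C (Suc t) = insert (\<sigma> (Suc t)) (C t)" using S F by auto
      have "card (C (Suc t)) = Suc (card (C t))" using C1 F IH by simp
      then show ?thesis using C1 IH R True by auto
    next
      case False
      then obtain e where e: "e \<in> C t" "C (Suc t) = insert (\<sigma> (Suc t)) (C t - {e})" using S F by auto
      have "card (C (Suc t)) = Suc (card (C t) - 1)" using e F IH by (simp add: card_Diff_singleton)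
      hence "card (C (Suc t)) = card (C t)" using e IH card_gt_0_iff by (metis Suc_pred' empty_iff)
      then show ?thesis using e IH R False by auto
    qed
  qed
qed

lemma reenter:
  assumes V: "valid_run k T \<sigma> C"
  shows "b \<le> T \<Longrightarrow> a \<le> b \<Longrightarrow> p \<notin> C a \<Longrightarrow> p \<in> C b \<Longrightarrow> \<exists>u. a < u \<and> u \<le> b \<and> \<sigma> u = p"
proof (induction b)
  case 0 then show ?case by simp
next
  case (Suc b)
  show ?case
  proof (cases "a = Suc b")
    case True then show ?thesis using Suc by simp
  next
    case False
    hence ab: "a \<le> b" using Suc by simp
    show ?thesis
    proof (cases "p \<in> C b")
      case True
      then obtain u where "a < u" "u \<le> b" "\<sigma> u = p" using Suc ab by auto
      then show ?thesis by (intro exI[of _ u]) simp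
    next
      case False
      hence "p = \<sigma> (Suc b)" using valid_sub[OF V Suc.prems(1)] Suc.prems(4) by auto
      then show ?thesis using ab by (intro exI[of _ "Suc b"]) simp
    qed
  qed
qed

lemma nr_cong:
  assumes "\<And>s. (a < s \<and> s \<le> T \<and> \<sigma> s = p) = (b < s \<and> s \<le> T \<and> \<sigma> s = p)"
  shows "next_req T \<sigma> a p = next_req T \<sigma> b p"
proof -
  have "(\<lambda>s. a < s \<and> s \<le> T \<and> \<sigma> s = p) = (\<lambda>s. b < s \<and> s \<le> T \<and> \<sigma> s = p)"
    using assms by blast
  thus ?thesis unfolding next_req_def by (simp only:)
qed

lemma nr_at:
  assumes "Suc t \<le> T"
  shows "next_req T \<sigma> t (\<sigma> (Suc t)) = Suc t"
proof -
  have "(LEAST s. t < s \<and> s \<le> T \<and> \<sigma> s = \<sigma> (Suc t)) = Suc t"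
    by (rule Least_equality) (use assms in auto)
  thus ?thesis unfolding next_req_def using assms by auto
qed

lemma nr_gt:
  assumes "t \<le> T"
  shows "t < next_req T \<sigma> t p"
proof (cases "\<exists>s. t < s \<and> s \<le> T \<and> \<sigma> s = p")
  case True
  hence "t < (LEAST s. t < s \<and> s \<le> T \<and> \<sigma> s = p)" by (metis (mono_tags, lifting) LeastI_ex)
  thus ?thesis unfolding next_req_def if_P[OF True] .
next
  case False thus ?thesis using assms unfolding next_req_def if_not_P[OF False] by simp
qed

lemma nr_shift:
  assumes "\<sigma> (Suc t) \<noteq> p"
  shows "next_req T \<sigma> t p = next_req T \<sigma> (Suc t) p"
proof (rule nr_cong)
  fix s show "(t < s \<and> s \<le> T \<and> \<sigma> s = p) = (Suc t < s \<and> s \<le> T \<and> \<sigma> s = p)"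
    using assms by (cases "s = Suc t") auto
qed




definition cnt :: "(nat \<Rightarrow> bool) \<Rightarrow> nat \<Rightarrow> nat" where
  "cnt P t = card {s\<in>{1..t}. P s}"

definition bad :: "nat \<Rightarrow> (nat \<Rightarrow> 'p) \<Rightarrow> (nat \<Rightarrow> 'p set) \<Rightarrow> nat \<Rightarrow> bool" where
  "bad T \<sigma> Q s \<longleftrightarrow> miss \<sigma> Q s \<and> (\<exists>e\<in>Q (s - 1). e \<notin> Q s \<and>
      (\<exists>q\<in>Q (s - 1). next_req T \<sigma> (s - 1) e < next_req T \<sigma> (s - 1) q))"

lemma cnt_0[simp]: "cnt P 0 = 0" by (simp add: cnt_def)

lemma cnt_Suc: "cnt P (Suc t) = cnt P t + (if P (Suc t) then 1 else 0)"
proof -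
  have "{s\<in>{1..Suc t}. P s} = (if P (Suc t) then insert (Suc t) {s\<in>{1..t}. P s} else {s\<in>{1..t}. P s})"
    by (auto simp: atLeastAtMostSuc_conv)
  thus ?thesis unfolding cnt_def by simp
qed

lemma conv:
  assumes bij: "bij_betw g' Q1 B1" and gr: "g' r = r" and rQ: "r \<in> Q1"
    and nx: "\<And>x. x \<noteq> r \<Longrightarrow> nx' x = nx x"
  shows "cst g' Q1 nx' = cst g' Q1 nx"
  unfolding cst_def
proof (rule sum.cong)
  fix q assume q: "q \<in> Q1"
  show "vi g' nx' q = vi g' nx q"
  proof (cases "q = r")
    case True thus ?thesis using gr by (simp add: vi_def)
  next
    case False
    have "g' q \<noteq> r" using inj_onD[OF bij_betw_imp_inj_on[OF bij], of q r] q rQ gr False by auto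
    thus ?thesis using False nx by (simp add: vi_def)
  qed
qed simp

lemma main_inv:
  assumes VQ: "valid_run k T \<sigma> Q" and VB: "valid_run k T \<sigma> B"
  shows "t \<le> T \<Longrightarrow> \<exists>g. bij_betw g (Q t) (B t) \<and>
     cnt (miss \<sigma> Q) t + cst g (Q t) (next_req T \<sigma> t) \<le> cnt (miss \<sigma> B) t + cnt (bad T \<sigma> Q) t"
proof (induction t)
  case 0
  show ?case using valid_zero[OF VQ] valid_zero[OF VB]
    by (intro exI[of _ id]) (simp add: cst_def bij_betw_def)
next
  case (Suc t)
  then obtain g where bij: "bij_betw g (Q t) (B t)" and
    IH: "cnt (miss \<sigma> Q) t + cst g (Q t) (next_req T \<sigma> t) \<le> cnt (miss \<sigma> B) t + cnt (bad T \<sigma> Q) t"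
    using Suc.IH Suc.prems Suc_leD by blast
  define r where "r = \<sigma> (Suc t)"
  define nx where "nx = next_req T \<sigma> t"
  define nx' where "nx' = next_req T \<sigma> (Suc t)"
  have nxx: "\<And>x. x \<noteq> r \<Longrightarrow> nx' x = nx x"
  proof -
    fix x assume "x \<noteq> r"
    hence "\<sigma> (Suc t) \<noteq> x" by (simp add: r_def)
    from nr_shift[where T=T and \<sigma>=\<sigma> and t=t and p=x, OF this]
    show "nx' x = nx x" by (simp add: nx_def nx'_def)
  qed
  have nxr: "\<And>x. x \<noteq> r \<Longrightarrow> nx r < nx x"
  proof -
    fix x assume "x \<noteq> r"
    hence "nx x = nx' x" using nxx by simp
    moreover have "Suc t < nx' x" unfolding nx'_def using nr_gt[where t="Suc t" and T=T and \<sigma>=\<sigma> and p=x] Suc.prems by simp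
    moreover have "nx r = Suc t" unfolding nx_def r_def using nr_at[where t=t and T=T and \<sigma>=\<sigma>] Suc.prems by simp
    ultimately show "nx r < nx x" by simp
  qed
  have IQ: "finite (Q t)" "Q t \<subseteq> \<sigma> ` {1..t}" "card (Q t) < k \<longrightarrow> \<sigma> ` {1..t} \<subseteq> Q t"
    using run_inv[OF VQ, of t] Suc.prems by auto
  have IB: "finite (B t)" "B t \<subseteq> \<sigma> ` {1..t}" "card (B t) < k \<longrightarrow> \<sigma> ` {1..t} \<subseteq> B t"
    using run_inv[OF VB, of t] Suc.prems by auto
  note SQ = valid_step[OF VQ Suc.prems, folded r_def]
  note SB = valid_step[OF VB Suc.prems, folded r_def]
  have mQ: "miss \<sigma> Q (Suc t) \<longleftrightarrow> r \<notin> Q t" by (simp add: miss_def r_def)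
  have mB: "miss \<sigma> B (Suc t) \<longleftrightarrow> r \<notin> B t" by (simp add: miss_def r_def)
  have cQ: "cnt (miss \<sigma> Q) (Suc t) = cnt (miss \<sigma> Q) t + (if r \<notin> Q t then 1 else 0)"
    using cnt_Suc mQ by simp
  have cB: "cnt (miss \<sigma> B) (Suc t) = cnt (miss \<sigma> B) t + (if r \<notin> B t then 1 else 0)"
    using cnt_Suc mB by simp
  have cbad: "cnt (bad T \<sigma> Q) (Suc t) = cnt (bad T \<sigma> Q) t + (if bad T \<sigma> Q (Suc t) then 1 else 0)"
    using cnt_Suc by simp
  have badI: "(if \<forall>x\<in>Q t. nx x \<le> nx e then 0 else 1) \<le> (if bad T \<sigma> Q (Suc t) then 1 else 0::nat)"
    if e: "e \<in> Q t" "Q (Suc t) = insert r (Q t - {e})" and rQ: "r \<notin> Q t" for e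
  proof (cases "\<forall>x\<in>Q t. nx x \<le> nx e")
    case True thus ?thesis by simp
  next
    case False
    then obtain q where "q \<in> Q t" "nx e < nx q" by (auto simp: not_le)
    moreover have "e \<notin> Q (Suc t)" using e rQ by auto
    ultimately have "bad T \<sigma> Q (Suc t)" using e mQ rQ unfolding bad_def nx_def by auto
    thus ?thesis by simp
  qed
  show ?case
  proof (cases "r \<in> Q t")
    case rQ: True
    show ?thesis
    proof (cases "r \<in> B t")
      case rB: True
      have Q1: "Q (Suc t) = Q t" using SQ rQ by blast
      have B1: "B (Suc t) = B t" using SB rB by blast
      obtain g' where g': "bij_betw g' (Q t) (B t)" "g' r = r" "cst g' (Q t) nx \<le> cst g (Q t) nx"
        using L_hit[OF bij IQ(1) rQ rB] by blast
      have "cst g' (Q t) nx' = cst g' (Q t) nx" using conv[OF g'(1) g'(2) rQ nxx] .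
      then show ?thesis using g' IH cQ cB cbad rQ rB unfolding Q1 B1 nx_def nx'_def
        by (intro exI[of _ g']) simp
    next
      case rB: False
      have Q1: "Q (Suc t) = Q t" using SQ rQ by blast
      have "r \<in> \<sigma> ` {1..t}" using subsetD[OF IQ(2) rQ] .
      hence "\<not> card (B t) < k" using IB(3) rB by blast
      then obtain f where f: "f \<in> B t" "B (Suc t) = insert r (B t - {f})" using SB rB by blast
      obtain g' where g': "bij_betw g' (Q t) (insert r (B t - {f}))" "g' r = r"
          "cst g' (Q t) nx \<le> cst g (Q t) nx + 1"
        using L_missB[OF bij IQ(1) rQ rB f(1)] by blast
      have "cst g' (Q t) nx' = cst g' (Q t) nx" using conv[OF g'(1) g'(2) rQ nxx] .
      then show ?thesis using g' IH cQ cB cbad rQ rB unfolding Q1 f(2) nx_def nx'_def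
        by (intro exI[of _ g']) simp
    qed
  next
    case rQ: False
    show ?thesis
    proof (cases "r \<in> B t")
      case rB: True
      have B1: "B (Suc t) = B t" using SB rB by blast
      have "r \<in> \<sigma> ` {1..t}" using subsetD[OF IB(2) rB] .
      hence "\<not> card (Q t) < k" using IQ(3) rQ by blast
      then obtain e where e: "e \<in> Q t" "Q (Suc t) = insert r (Q t - {e})" using SQ rQ by blast
      obtain g' where g': "bij_betw g' (insert r (Q t - {e})) (B t)" "g' r = r"
          "cst g' (insert r (Q t - {e})) nx + 1 \<le> cst g (Q t) nx + (if \<forall>x\<in>Q t. nx x \<le> nx e then 0 else 1)"
        using L_missQ[where nx=nx, OF bij IQ(1) rQ rB e(1) nxr] by blast
      have "cst g' (insert r (Q t - {e})) nx' = cst g' (insert r (Q t - {e})) nx"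
        using conv[OF g'(1) g'(2) _ nxx] by simp
      moreover note badI[OF e rQ]
      ultimately show ?thesis using g' IH cQ cB cbad rQ rB unfolding B1 e(2) nx_def nx'_def
        by (intro exI[of _ g']) simp
    next
      case rB: False
      have cc: "card (Q t) = card (B t)" using bij_betw_same_card[OF bij] .
      show ?thesis
      proof (cases "card (Q t) < k")
        case True
        have Q1: "Q (Suc t) = insert r (Q t)" using SQ rQ True by simp
        have B1: "B (Suc t) = insert r (B t)" using SB rB True cc by simp
        obtain g' where g': "bij_betw g' (insert r (Q t)) (insert r (B t))" "g' r = r"
          "cst g' (insert r (Q t)) nx \<le> cst g (Q t) nx"
          using L_nf[OF bij IQ(1) rQ rB] by blast
        have "cst g' (insert r (Q t)) nx' = cst g' (insert r (Q t)) nx"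
          using conv[OF g'(1) g'(2) _ nxx] by simp
        then show ?thesis using g' IH cQ cB cbad rQ rB unfolding Q1 B1 nx_def nx'_def
          by (intro exI[of _ g']) simp
      next
        case False
        then obtain e where e: "e \<in> Q t" "Q (Suc t) = insert r (Q t - {e})" using SQ rQ by blast
        obtain f where f: "f \<in> B t" "B (Suc t) = insert r (B t - {f})" using SB rB False cc by auto
        obtain g' where g': "bij_betw g' (insert r (Q t - {e})) (insert r (B t - {f}))" "g' r = r"
          "cst g' (insert r (Q t - {e})) nx \<le> cst g (Q t) nx + (if \<forall>x\<in>Q t. nx x \<le> nx e then 0 else 1)"
          using L_full[OF bij IQ(1) rQ rB e(1) f(1)] by blast
        have "cst g' (insert r (Q t - {e})) nx' = cst g' (insert r (Q t - {e})) nx"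
          using conv[OF g'(1) g'(2) _ nxx] by simp
        moreover note badI[OF e rQ]
        ultimately show ?thesis using g' IH cQ cB cbad rQ rB unfolding e(2) f(2) nx_def nx'_def
          by (intro exI[of _ g']) simp
      qed
    qed
  qed
qed




lemma lr:
  assumes "p \<in> \<sigma> ` {1..t}"
  shows "1 \<le> last_req \<sigma> t p \<and> last_req \<sigma> t p \<le> t \<and> \<sigma> (last_req \<sigma> t p) = p"
    and "\<And>u. 1 \<le> u \<Longrightarrow> u \<le> t \<Longrightarrow> \<sigma> u = p \<Longrightarrow> u \<le> last_req \<sigma> t p"
proof -
  define A where "A = {t'. 1 \<le> t' \<and> t' \<le> t \<and> \<sigma> t' = p}"
  have fA: "finite A" unfolding A_def by (rule finite_subset[of _ "{..t}"]) auto
  have nA: "A \<noteq> {}" using assms unfolding A_def by auto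
  have "Max A \<in> A" using Max_in[OF fA nA] .
  thus "1 \<le> last_req \<sigma> t p \<and> last_req \<sigma> t p \<le> t \<and> \<sigma> (last_req \<sigma> t p) = p"
    unfolding last_req_def A_def by simp
  fix u assume "1 \<le> u" "u \<le> t" "\<sigma> u = p"
  hence "u \<in> A" unfolding A_def by simp
  thus "u \<le> last_req \<sigma> t p" using Max_ge[OF fA] unfolding last_req_def A_def by simp
qed

lemma nu_lr:
  assumes "p \<in> \<sigma> ` {1..t}"
  shows "nu T \<sigma> (last_req \<sigma> t p) = next_req T \<sigma> t p"
proof -
  note L = lr[OF assms]
  have "next_req T \<sigma> (last_req \<sigma> t p) p = next_req T \<sigma> t p"
  proof (rule nr_cong)
    fix s
    show "(last_req \<sigma> t p < s \<and> s \<le> T \<and> \<sigma> s = p) = (t < s \<and> s \<le> T \<and> \<sigma> s = p)"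
    proof
      assume a: "last_req \<sigma> t p < s \<and> s \<le> T \<and> \<sigma> s = p"
      have "t < s"
      proof (rule ccontr)
        assume "\<not> t < s"
        hence "s \<le> last_req \<sigma> t p" using L(2)[of s] a L(1) by simp
        thus False using a by simp
      qed
      thus "t < s \<and> s \<le> T \<and> \<sigma> s = p" using a by simp
    next
      assume "t < s \<and> s \<le> T \<and> \<sigma> s = p"
      thus "last_req \<sigma> t p < s \<and> s \<le> T \<and> \<sigma> s = p" using L(1) by simp
    qed
  qed
  thus ?thesis unfolding nu_def using L(1) by simp
qed

theorem mainTheorem5:
  fixes k T :: nat and \<sigma> :: "nat \<Rightarrow> 'p" and Q B :: "nat \<Rightarrow> 'p set"
  assumes "valid_run k T \<sigma> Q"
    and "belady_run k T \<sigma> B"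
  shows "\<exists>E. eviction_graph T \<sigma> Q E \<and> num_misses T \<sigma> Q \<le> num_misses T \<sigma> B + card E"
proof -
  have VQ: "valid_run k T \<sigma> Q" by fact
  have VB: "valid_run k T \<sigma> B" using assms(2) by (simp add: belady_run_def)
  obtain g where "bij_betw g (Q T) (B T)" and
    M: "cnt (miss \<sigma> Q) T + cst g (Q T) (next_req T \<sigma> T) \<le> cnt (miss \<sigma> B) T + cnt (bad T \<sigma> Q) T"
    using main_inv[OF VQ VB, of T] by blast
  define S where "S = {s\<in>{1..T}. bad T \<sigma> Q s}"
  define nx where "nx = (\<lambda>s. next_req T \<sigma> s)"
  define ev where "ev = (\<lambda>s. SOME e. e \<in> Q (s - 1) \<and> e \<notin> Q s \<and> (\<exists>q\<in>Q (s - 1). nx (s - 1) e < nx (s - 1) q))"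
  define wt where "wt = (\<lambda>s. SOME q. q \<in> Q (s - 1) \<and> nx (s - 1) (ev s) < nx (s - 1) q)"
  have evp: "ev s \<in> Q (s - 1) \<and> ev s \<notin> Q s \<and> wt s \<in> Q (s - 1) \<and> nx (s - 1) (ev s) < nx (s - 1) (wt s)"
    if "s \<in> S" for s
  proof -
    have "\<exists>e. e \<in> Q (s - 1) \<and> e \<notin> Q s \<and> (\<exists>q\<in>Q (s - 1). nx (s - 1) e < nx (s - 1) q)"
      using that unfolding S_def bad_def nx_def by blast
    hence e: "ev s \<in> Q (s - 1) \<and> ev s \<notin> Q s \<and> (\<exists>q\<in>Q (s - 1). nx (s - 1) (ev s) < nx (s - 1) q)"
      unfolding ev_def by (rule someI_ex)
    hence "\<exists>q. q \<in> Q (s - 1) \<and> nx (s - 1) (ev s) < nx (s - 1) q" by blast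
    hence "wt s \<in> Q (s - 1) \<and> nx (s - 1) (ev s) < nx (s - 1) (wt s)"
      unfolding wt_def by (rule someI_ex)
    thus ?thesis using e by blast
  qed
  have inR: "Q (s - 1) \<subseteq> \<sigma> ` {1..s - 1}" if "s \<in> S" for s
  proof -
    have "s - 1 \<le> T" using that unfolding S_def by auto
    thus ?thesis using run_inv[OF VQ, of "s - 1"] by blast
  qed
  define jj where "jj = (\<lambda>s. last_req \<sigma> (s - 1) (ev s))"
  define ii where "ii = (\<lambda>s. last_req \<sigma> (s - 1) (wt s))"
  have jjp: "1 \<le> jj s \<and> jj s \<le> s - 1 \<and> \<sigma> (jj s) = ev s" if "s \<in> S" for s
    using lr(1)[OF subsetD[OF inR[OF that]]] evp[OF that] unfolding jj_def by blast
  have iip: "1 \<le> ii s \<and> ii s \<le> s - 1 \<and> \<sigma> (ii s) = wt s" if "s \<in> S" for s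
    using lr(1)[OF subsetD[OF inR[OF that]]] evp[OF that] unfolding ii_def by blast
  have lt: "jj s \<noteq> jj s'" if s: "s \<in> S" and s': "s' \<in> S" and ss: "s < s'" for s s'
  proof
    assume eq: "jj s = jj s'"
    hence ee: "ev s = ev s'" using jjp[OF s] jjp[OF s'] by metis
    have s'T: "s' - 1 \<le> T" using s' unfolding S_def by auto
    have "ev s \<notin> Q s" "ev s \<in> Q (s' - 1)" using evp[OF s] evp[OF s'] ee by auto
    moreover have "s \<le> s' - 1" using ss by simp
    ultimately obtain u where u: "s < u" "u \<le> s' - 1" "\<sigma> u = ev s"
      using reenter[OF VQ s'T, of s "ev s"] by blast
    have "u \<le> jj s'" unfolding jj_def
      using lr(2)[OF subsetD[OF inR[OF s'] conjunct1[OF evp[OF s']]], of u] u ee by simp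
    moreover have "jj s \<le> s - 1" using jjp[OF s] by simp
    ultimately show False using eq u(1) by simp
  qed
  have injj: "inj_on jj S"
  proof (rule inj_onI)
    fix s s' assume "s \<in> S" "s' \<in> S" "jj s = jj s'"
    thus "s = s'" using lt by (metis linorder_neqE_nat)
  qed
  define E where "E = (\<lambda>s. (ii s, jj s)) ` S"
  have cE: "card E = card S"
    unfolding E_def by (rule card_image) (use injj in \<open>auto simp: inj_on_def\<close>)
  have "eviction_graph T \<sigma> Q E"
    unfolding eviction_graph_def
  proof (intro conjI)
    show "E \<subseteq> {1..T} \<times> {1..T}"
    proof
      fix x assume "x \<in> E"
      then obtain s where s: "s \<in> S" "x = (ii s, jj s)" unfolding E_def by blast
      have "s \<le> T" using s unfolding S_def by simp
      thus "x \<in> {1..T} \<times> {1..T}" using iip[OF s(1)] jjp[OF s(1)] s(2) by auto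
    qed
    show "\<forall>(i, j)\<in>E. \<exists>t. t + 1 \<le> T \<and> \<sigma> j \<in> Q t \<and> \<sigma> j \<notin> Q (t + 1) \<and>
         j \<in> cached_idx \<sigma> Q t \<and> i \<in> cached_idx \<sigma> Q t \<and> nu T \<sigma> j < nu T \<sigma> i"
    proof
      fix x assume "x \<in> E"
      then obtain s where s: "s \<in> S" "x = (ii s, jj s)" unfolding E_def by blast
      have s1: "1 \<le> s" "s \<le> T" using s unfolding S_def by auto
      have st: "s - 1 + 1 = s" using s1 by simp
      note ep = evp[OF s(1)]
      have "nu T \<sigma> (jj s) = nx (s - 1) (ev s)"
        unfolding jj_def nx_def by (rule nu_lr) (use inR[OF s(1)] ep in blast)
      moreover have "nu T \<sigma> (ii s) = nx (s - 1) (wt s)"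
        unfolding ii_def nx_def by (rule nu_lr) (use inR[OF s(1)] ep in blast)
      moreover have "jj s \<in> cached_idx \<sigma> Q (s - 1)" "ii s \<in> cached_idx \<sigma> Q (s - 1)"
        unfolding cached_idx_def jj_def ii_def using ep by auto
      ultimately have "s - 1 + 1 \<le> T \<and> \<sigma> (jj s) \<in> Q (s - 1) \<and> \<sigma> (jj s) \<notin> Q (s - 1 + 1) \<and>
         jj s \<in> cached_idx \<sigma> Q (s - 1) \<and> ii s \<in> cached_idx \<sigma> Q (s - 1) \<and> nu T \<sigma> (jj s) < nu T \<sigma> (ii s)"
        using ep jjp[OF s(1)] st s1 by simp
      thus "case x of (i, j) \<Rightarrow> \<exists>t. t + 1 \<le> T \<and> \<sigma> j \<in> Q t \<and> \<sigma> j \<notin> Q (t + 1) \<and>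
         j \<in> cached_idx \<sigma> Q t \<and> i \<in> cached_idx \<sigma> Q t \<and> nu T \<sigma> j < nu T \<sigma> i"
        using s(2) by blast
    qed
    show "\<forall>i i' j. (i, j) \<in> E \<and> (i', j) \<in> E \<longrightarrow> i = i'"
    proof (intro allI impI)
      fix i i' j assume "(i, j) \<in> E \<and> (i', j) \<in> E"
      then obtain s s' where "s \<in> S" "s' \<in> S" "(i, j) = (ii s, jj s)" "(i', j) = (ii s', jj s')"
        unfolding E_def by blast
      thus "i = i'" using injj by (auto dest: inj_onD)
    qed
  qed
  moreover have "num_misses T \<sigma> Q \<le> num_misses T \<sigma> B + card E"
    using M cE unfolding num_misses_def cnt_def S_def by simp
  ultimately show ?thesis by blast
qed


end
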